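(* Let $d\ge1$, $a$, $b$ be integers and $x_0$ a real number. If $\pi(x;d,a)\ge\pi(x;d,b)$ for all $x\le x_0$, then for all $x\le x_0$ both $N(x;d,a)\ge N(x;d,b)$ and $\mu_{d,a}(x)\ge\mu_{d,b}(x)$.
   Context: $\pi(x;d,a)$ is the number of primes $p\le x$ with $p\equiv a\pmod d$. Let $S_{d,a}$ be the set of positive integers all of whose prime divisors $p$ satisfy $p\equiv a\pmod d$ (including $1$). Then $N(x;d,a)=\#\{n\le x: n\in S_{d,a}\}$ and $\mu_{d,a}(x)=\sum_{n\le x,\ n\in S_{d,a}}1/n$ (in the paper, $\mu_{g_{d,a}}(x)$ with $g_{d,a}$ the indicator of $S_{d,a}$). *)

theory Defs
  imports "HOL-Number_Theory.Number_Theory"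
begin

definition prime_count_ap :: "int \<Rightarrow> int \<Rightarrow> real \<Rightarrow> nat" where
  "prime_count_ap d a x = card {p::nat. prime p \<and> real p \<le> x \<and> [int p = a] (mod d)}"

definition in_S :: "int \<Rightarrow> int \<Rightarrow> nat \<Rightarrow> bool" where
  "in_S d a n \<longleftrightarrow> n > 0 \<and> (\<forall>p\<in>prime_factors n. [int p = a] (mod d))"

definition N_ap :: "int \<Rightarrow> int \<Rightarrow> real \<Rightarrow> nat" where
  "N_ap d a x = card {n::nat. real n \<le> x \<and> in_S d a n}"

definition mu_ap :: "int \<Rightarrow> int \<Rightarrow> real \<Rightarrow> real" where
  "mu_ap d a x = (\<Sum>n\<in>{n::nat. real n \<le> x \<and> in_S d a n}. 1 / real n)"

end

theory Submission
  imports Defs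
begin

lemma inj_exists:
  fixes B :: "nat set"
  assumes "finite B"
  shows "finite A \<Longrightarrow> (\<forall>y. card {b\<in>B. b \<le> y} \<le> card {a\<in>A. a \<le> y})
    \<Longrightarrow> \<exists>f. inj_on f B \<and> f ` B \<subseteq> A \<and> (\<forall>b\<in>B. f b \<le> b)"
  using assms
proof (induction B arbitrary: A rule: finite_linorder_max_induct)
  case empty
  then show ?case by auto
next
  case (insert m B)
  define Am where "Am = {a\<in>A. a \<le> m}"
  have finAm: "finite Am" using insert.prems(1) unfolding Am_def by auto
  have eqm: "{b\<in>insert m B. b \<le> m} = insert m B" using insert.hyps(2) by auto
  have mB: "m \<notin> B" using insert.hyps(2) by auto
  have cB: "card B + 1 \<le> card Am"
    using insert.prems(2)[rule_format, of m] eqm mB insert.hyps(1) unfolding Am_def by simp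
  hence ne: "Am \<noteq> {}" by auto
  define as where "as = Max Am"
  have asA: "as \<in> Am" using finAm ne unfolding as_def by auto
  have asmax: "\<And>a. a \<in> Am \<Longrightarrow> a \<le> as" using finAm unfolding as_def by auto
  define A' where "A' = A - {as}"
  have "\<forall>y. card {b\<in>B. b \<le> y} \<le> card {a\<in>A'. a \<le> y}"
  proof
    fix y
    show "card {b\<in>B. b \<le> y} \<le> card {a\<in>A'. a \<le> y}"
    proof (cases "y < m")
      case True
      show ?thesis
      proof (cases "as \<le> y")
        case True2: True
        have "{a\<in>A'. a \<le> y} = Am - {as}"
          using True True2 asmax unfolding A'_def Am_def by force
        hence "card {a\<in>A'. a \<le> y} = card Am - 1" using asA finAm by simp
        moreover have "card {b\<in>B. b \<le> y} \<le> card B"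
          using insert.hyps(1) by (intro card_mono) auto
        ultimately show ?thesis using cB by linarith
      next
        case False
        have "{a\<in>A'. a \<le> y} = {a\<in>A. a \<le> y}" using False unfolding A'_def by auto
        moreover have "{b\<in>B. b \<le> y} = {b\<in>insert m B. b \<le> y}" using True by auto
        ultimately show ?thesis using insert.prems(2) by simp
      qed
    next
      case False
      have "{b\<in>insert m B. b \<le> y} = insert m {b\<in>B. b \<le> y}" using False by auto
      hence c1: "card {b\<in>insert m B. b \<le> y} = card {b\<in>B. b \<le> y} + 1"
        using mB insert.hyps(1) by simp
      have "as \<in> {a\<in>A. a \<le> y}" using asA False unfolding Am_def by auto
      moreover have "{a\<in>A'. a \<le> y} = {a\<in>A. a \<le> y} - {as}" unfolding A'_def by auto
      moreover have "finite {a\<in>A. a \<le> y}" using insert.prems(1) by auto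
      ultimately have "card {a\<in>A'. a \<le> y} = card {a\<in>A. a \<le> y} - 1" by simp
      thus ?thesis using c1 insert.prems(2)[rule_format, of y] by linarith
    qed
  qed
  moreover have "finite A'" using insert.prems(1) unfolding A'_def by auto
  ultimately obtain f where f: "inj_on f B" "f ` B \<subseteq> A'" "\<forall>b\<in>B. f b \<le> b"
    using insert.IH by blast
  define g where "g = f(m := as)"
  have "inj_on g (insert m B)"
  proof -
    have "inj_on g B" using f(1) mB unfolding g_def by (simp add: inj_on_def)
    moreover have "g m \<notin> g ` (B - {m})" using f(2) mB unfolding g_def A'_def by auto
    ultimately show ?thesis by (simp add: inj_on_insert)
  qed
  moreover have "g ` insert m B \<subseteq> A" using f(2) asA mB unfolding g_def A'_def Am_def by auto
  moreover have "\<forall>b\<in>insert m B. g b \<le> b" using f(3) asA mB unfolding g_def Am_def by auto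
  ultimately show ?case by blast
qed

lemma prod_mset_mono_nat:
  fixes f :: "nat \<Rightarrow> nat"
  assumes "\<And>p. p \<in># M \<Longrightarrow> f p \<le> p"
  shows "prod_mset (image_mset f M) \<le> prod_mset M"
  using assms
proof (induction M)
  case empty
  then show ?case by simp
next
  case (add x M)
  then show ?case by (simp add: mult_le_mono)
qed

lemma image_mset_inj:
  assumes "inj_on f B" "set_mset M \<subseteq> B" "set_mset N \<subseteq> B"
    "image_mset f M = image_mset f N"
  shows "M = N"
proof -
  have "image_mset (inv_into B f) (image_mset f M) = image_mset (inv_into B f) (image_mset f N)"
    using assms(4) by simp
  moreover have "image_mset (inv_into B f) (image_mset f K) = K" if "set_mset K \<subseteq> B" for K
  proof -
    have "image_mset (inv_into B f) (image_mset f K) = image_mset (\<lambda>x. x) K"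
      unfolding multiset.map_comp o_def
      by (rule image_mset_cong) (use that assms(1) in auto)
    thus ?thesis by simp
  qed
  ultimately show ?thesis using assms(2,3) by simp
qed

theorem corollary1:
  fixes d a b :: int and x0 :: real
  assumes "d \<ge> 1"
    and "\<forall>x::real. x \<le> x0 \<longrightarrow> prime_count_ap d a x \<ge> prime_count_ap d b x"
  shows "\<forall>x::real. x \<le> x0 \<longrightarrow> N_ap d a x \<ge> N_ap d b x \<and> mu_ap d a x \<ge> mu_ap d b x"
proof (intro allI impI)
  fix x :: real
  assume x: "x \<le> x0"
  define A where "A = {p::nat. prime p \<and> real p \<le> x \<and> [int p = a] (mod d)}"
  define B where "B = {p::nat. prime p \<and> real p \<le> x \<and> [int p = b] (mod d)}"
  have finx: "finite {p::nat. real p \<le> x}"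
    by (rule finite_subset[of _ "{..nat \<lfloor>x\<rfloor>}"]) (auto simp: le_nat_floor)
  have finA: "finite A" by (rule finite_subset[OF _ finx]) (auto simp: A_def)
  have finB: "finite B" by (rule finite_subset[OF _ finx]) (auto simp: B_def)
  have "\<forall>y. card {q\<in>B. q \<le> y} \<le> card {q\<in>A. q \<le> y}"
  proof
    fix y :: nat
    have "{q\<in>B. q \<le> y} = {p::nat. prime p \<and> real p \<le> min x (real y) \<and> [int p = b] (mod d)}"
      unfolding B_def by auto
    moreover have "{q\<in>A. q \<le> y} = {p::nat. prime p \<and> real p \<le> min x (real y) \<and> [int p = a] (mod d)}"
      unfolding A_def by auto
    moreover have "min x (real y) \<le> x0" using x by simp
    ultimately show "card {q\<in>B. q \<le> y} \<le> card {q\<in>A. q \<le> y}"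
      using assms(2)[rule_format, of "min x (real y)"] unfolding prime_count_ap_def
      by (simp only:)
  qed
  then obtain f where f: "inj_on f B" "f ` B \<subseteq> A" "\<forall>q\<in>B. f q \<le> q"
    using inj_exists[OF finB finA] by blast
  define F where "F n = prod_mset (image_mset f (prime_factorization n))" for n
  define SA where "SA = {n::nat. real n \<le> x \<and> in_S d a n}"
  define SB where "SB = {n::nat. real n \<le> x \<and> in_S d b n}"
  have finSA: "finite SA" by (rule finite_subset[OF _ finx]) (auto simp: SA_def)
  have finSB: "finite SB" by (rule finite_subset[OF _ finx]) (auto simp: SB_def)
  have pfB: "set_mset (prime_factorization n) \<subseteq> B" if "n \<in> SB" for n
  proof
    fix p assume p: "p \<in># prime_factorization n"
    have n0: "n > 0" using that unfolding SB_def in_S_def by auto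
    have "p \<le> n" using p n0 by (simp add: dvd_imp_le in_prime_factors_imp_dvd)
    moreover have "prime p" using p by auto
    moreover have "[int p = b] (mod d)" using that p unfolding SB_def in_S_def by auto
    ultimately show "p \<in> B" using that unfolding SB_def B_def by auto
  qed
  have pfF: "prime_factorization (F n) = image_mset f (prime_factorization n)"
    if "n \<in> SB" for n
    unfolding F_def
    by (rule prime_factorization_prod_mset_primes) (use pfB[OF that] f(2) in \<open>auto simp: A_def\<close>)
  have Fle: "F n \<le> n" if "n \<in> SB" for n
  proof -
    have n0: "n > 0" using that unfolding SB_def in_S_def by auto
    have "F n \<le> prod_mset (prime_factorization n)"
      unfolding F_def by (rule prod_mset_mono_nat) (use pfB[OF that] f(3) in auto)
    thus ?thesis using n0 by simp
  qed
  have Fpos: "F n > 0" if "n \<in> SB" for n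
  proof -
    have "0 \<notin># image_mset f (prime_factorization n)"
      using pfB[OF that] f(2) by (force simp: A_def)
    hence "F n \<noteq> 0" unfolding F_def by (simp add: prod_mset_zero_iff)
    thus ?thesis by simp
  qed
  have FSA: "F n \<in> SA" if "n \<in> SB" for n
  proof -
    have "real (F n) \<le> x" using Fle[OF that] that unfolding SB_def by auto
    moreover have "\<forall>p\<in>prime_factors (F n). [int p = a] (mod d)"
      using pfF[OF that] pfB[OF that] f(2) by (auto simp: A_def)
    ultimately show ?thesis using Fpos[OF that] unfolding SA_def in_S_def by auto
  qed
  have Finj: "inj_on F SB"
  proof (rule inj_onI)
    fix m n assume m: "m \<in> SB" and n: "n \<in> SB" and e: "F m = F n"
    have "image_mset f (prime_factorization m) = image_mset f (prime_factorization n)"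
      using pfF[OF m] pfF[OF n] e by simp
    hence "prime_factorization m = prime_factorization n"
      using image_mset_inj[OF f(1) pfB[OF m] pfB[OF n]] by simp
    moreover have "m > 0" "n > 0" using m n unfolding SB_def in_S_def by auto
    ultimately show "m = n" by (metis prod_mset_prime_factorization_nat not_gr0)
  qed
  have "card SB \<le> card SA"
    using card_inj_on_le[OF Finj _ finSA] FSA by blast
  moreover have "(\<Sum>n\<in>SB. 1 / real n) \<le> (\<Sum>n\<in>SA. 1 / real n)"
  proof -
    have "(\<Sum>n\<in>SB. 1 / real n) \<le> (\<Sum>n\<in>SB. 1 / real (F n))"
      by (rule sum_mono) (use Fle Fpos in \<open>force intro!: divide_left_mono mult_pos_pos intro: less_le_trans\<close>)
    also have "\<dots> = (\<Sum>m\<in>F ` SB. 1 / real m)"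
      using sum.reindex[OF Finj, of "\<lambda>m. 1 / real m"] by simp
    also have "\<dots> \<le> (\<Sum>m\<in>SA. 1 / real m)"
      by (rule sum_mono2[OF finSA]) (use FSA in auto)
    finally show ?thesis .
  qed
  ultimately show "N_ap d a x \<ge> N_ap d b x \<and> mu_ap d a x \<ge> mu_ap d b x"
    unfolding N_ap_def mu_ap_def SA_def SB_def by simp
qed

end
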